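(* For every finite admissible sequence of iterations $(w_0,x_0),\dots,(w_n,x_n)$ in $\mathcal I$ there is a downwards monotonous finite admissible sequence of iterations $(w'_0,x'_0),\dots,(w'_{n'},x'_{n'})$ with $(w'_0,x'_0)=(w_0,x_0)$, $w'_{n'}=w_n$ and $x'_{n'}\le x_n$.
   Context: $\{0,1\}$-matrix $A$, stochastic matrix $\Pi=(\pi_{ij})$ on $\{1,\dots,N\}$; $(k,m)$ is admissible iff $\pi_{km}>0$. $I=[0,1]$; $f_1,\dots,f_N:I\to I$ strictly increasing $C^1$ diffeomorphisms onto their images. $\mathcal I=\{1,\dots,N\}\times I$. A finite admissible sequence of iterations is a sequence $(w_0,x_0),\dots,(w_n,x_n)$ in $\mathcal I$ with $(w_i,w_{i+1})$ admissible and $x_{i+1}=f_{w_i}(x_i)$ for all $i<n$. It is downwards monotonous if for all $m<n$ with $w_m=w_n$ one has $x_m>x_n$. *)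

theory Defs
  imports "HOL-Analysis.Analysis"
begin

definition stochastic :: "nat \<Rightarrow> (nat \<Rightarrow> nat \<Rightarrow> real) \<Rightarrow> bool" where
  "stochastic N \<pi> \<longleftrightarrow>
     (\<forall>i\<in>{1..N}. \<forall>j\<in>{1..N}. 0 \<le> \<pi> i j) \<and>
     (\<forall>i\<in>{1..N}. (\<Sum>j=1..N. \<pi> i j) = 1)"

definition admissible_pair :: "(nat \<Rightarrow> nat \<Rightarrow> real) \<Rightarrow> nat \<Rightarrow> nat \<Rightarrow> bool" where
  "admissible_pair \<pi> k m \<longleftrightarrow> \<pi> k m > 0"

definition incr_C1_diffeo :: "(real \<Rightarrow> real) \<Rightarrow> bool" where
  "incr_C1_diffeo g \<longleftrightarrow>
     g ` {0..1} \<subseteq> {0..1} \<and> strict_mono_on {0..1} g \<and>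
     (\<exists>g'. (\<forall>x\<in>{0..1}. (g has_real_derivative g' x) (at x within {0..1}) \<and> g' x > 0)
           \<and> continuous_on {0..1} g')"

definition admissible_seq ::
  "nat \<Rightarrow> (nat \<Rightarrow> nat \<Rightarrow> real) \<Rightarrow> (nat \<Rightarrow> real \<Rightarrow> real) \<Rightarrow> (nat \<times> real) list \<Rightarrow> bool" where
  "admissible_seq N \<pi> f s \<longleftrightarrow>
     s \<noteq> [] \<and>
     (\<forall>i<length s. fst (s!i) \<in> {1..N} \<and> snd (s!i) \<in> {0..1}) \<and>
     (\<forall>i. Suc i < length s \<longrightarrow>
        admissible_pair \<pi> (fst (s!i)) (fst (s!Suc i)) \<and>
        snd (s!Suc i) = f (fst (s!i)) (snd (s!i)))"

definition downwards_monotonous :: "(nat \<times> real) list \<Rightarrow> bool" where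
  "downwards_monotonous s \<longleftrightarrow>
     (\<forall>m < length s - 1. fst (s!m) = fst (s!(length s - 1)) \<longrightarrow>
        snd (s!m) > snd (s!(length s - 1)))"

end

theory Submission
  imports Defs
begin

lemma adm_take:
  assumes "admissible_seq N \<pi> f s" "m < length s"
  shows "admissible_seq N \<pi> f (take (Suc m) s)"
  using assms unfolding admissible_seq_def by (auto simp: nth_take)

lemma main_aux:
  "admissible_seq N \<pi> f s \<Longrightarrow> \<exists>s'. admissible_seq N \<pi> f s' \<and> downwards_monotonous s' \<and>
              hd s' = hd s \<and> fst (last s') = fst (last s) \<and> snd (last s') \<le> snd (last s)"
proof (induction "length s" arbitrary: s rule: less_induct)
  case less
  have ne: "s \<noteq> []" using less.prems unfolding admissible_seq_def by auto
  show ?case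
  proof (cases "downwards_monotonous s")
    case True
    then show ?thesis using less.prems by blast
  next
    case False
    then obtain m where m: "m < length s - 1" "fst (s!m) = fst (s!(length s - 1))"
      "\<not> snd (s!m) > snd (s!(length s - 1))"
      unfolding downwards_monotonous_def by auto
    let ?t = "take (Suc m) s"
    have a: "admissible_seq N \<pi> f ?t" using adm_take[OF less.prems] m(1) by simp
    have l: "length ?t < length s" using m(1) by simp
    obtain s' where s': "admissible_seq N \<pi> f s'" "downwards_monotonous s'"
      "hd s' = hd ?t" "fst (last s') = fst (last ?t)" "snd (last s') \<le> snd (last ?t)"
      using less.hyps[OF l a] by blast
    have lt: "last ?t = s!m" using m(1) ne by (auto simp: last_conv_nth nth_take min_def)
    have ls: "last s = s!(length s - 1)" using ne by (simp add: last_conv_nth)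
    have ht: "hd ?t = hd s" using ne by simp
    show ?thesis using s' lt ls ht m by (intro exI[of _ s']) auto
  qed
qed

theorem mainTheorem8:
  fixes N :: nat and \<pi> :: "nat \<Rightarrow> nat \<Rightarrow> real" and f :: "nat \<Rightarrow> real \<Rightarrow> real"
    and s :: "(nat \<times> real) list"
  assumes "stochastic N \<pi>"
    and "\<forall>i\<in>{1..N}. incr_C1_diffeo (f i)"
    and "admissible_seq N \<pi> f s"
  shows "\<exists>s'. admissible_seq N \<pi> f s' \<and> downwards_monotonous s' \<and>
              hd s' = hd s \<and> fst (last s') = fst (last s) \<and> snd (last s') \<le> snd (last s)"
  using main_aux[OF assms(3)] .

end
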